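(* Let $d\ge1$. As an identity of rational functions in $s_1,\dots,s_d,t_1,\dots,t_d$ (in particular for all integer vectors $\vec s,\vec t$ at which all denominators on both sides are nonzero), $$\sum_{\sigma,\tau\in\mathcal{S}_d}\frac{\operatorname{sgn}\sigma\,\operatorname{sgn}\tau}{\prod_{i=1}^d\left(d+1-i+\sum_{j=i}^d\left(s_{\sigma(j)}+t_{\tau(j)}\right)\right)}=\prod_{1\le i<j\le d}(s_i-s_j)(t_i-t_j)\prod_{i,j=1}^d\frac{1}{1+s_i+t_j}.$$
   Context: $\mathcal{S}_d$ is the symmetric group on $\{1,\dots,d\}$ and $\operatorname{sgn}$ the sign of a permutation. *)

theory Defs
  imports "HOL-Combinatorics.Permutations"
begin

end

theory Submission
  imports Defs "HOL-Combinatorics.Multiset_Permutations" "Jordan_Normal_Form.Determinant"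
begin


fun tailprod :: "('b \<Rightarrow> 'a::field) \<Rightarrow> 'b list \<Rightarrow> 'a" where
  "tailprod b [] = 1"
| "tailprod b (x # xs) = sum_list (map b (x # xs)) * tailprod b xs"

lemma pf_list:
  fixes b :: "'b \<Rightarrow> 'a::field"
  assumes "finite A" "\<forall>xs\<in>permutations_of_set A. tailprod b xs \<noteq> 0" "\<forall>x\<in>A. b x \<noteq> 0"
  shows "(\<Sum>xs\<in>permutations_of_set A. 1 / tailprod b xs) = 1 / prod b A"
  using assms
proof (induction "card A" arbitrary: A)
  case 0
  then show ?case by simp
next
  case (Suc n)
  then have ne: "A \<noteq> {}" by auto
  have disj: "disjoint_family_on (\<lambda>x. (\<lambda>xs. x # xs) ` permutations_of_set (A - {x})) A"
    unfolding disjoint_family_on_def by auto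
  have sl: "sum_list (map b (x # xs)) = sum b A" if "x \<in> A" "xs \<in> permutations_of_set (A - {x})" for x xs
  proof -
    have "x # xs \<in> permutations_of_set A" using that permutations_of_set_nonempty[OF ne] by blast
    then show ?thesis by (metis permutations_of_setD sum_list_distinct_conv_sum_set)
  qed
  have IH: "(\<Sum>xs\<in>permutations_of_set (A - {x}). 1 / tailprod b xs) = 1 / prod b (A - {x})" if "x \<in> A" for x
  proof (rule Suc.hyps(1))
    show "n = card (A - {x})" using Suc.hyps(2) Suc.prems(1) that by simp
    show "finite (A - {x})" using Suc.prems by simp
    show "\<forall>x\<in>A - {x}. b x \<noteq> 0" using Suc.prems by simp
    show "\<forall>xs\<in>permutations_of_set (A - {x}). tailprod b xs \<noteq> 0"
    proof
      fix xs assume xs: "xs \<in> permutations_of_set (A - {x})"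
      then have "x # xs \<in> permutations_of_set A" using that permutations_of_set_nonempty[OF ne] by blast
      then show "tailprod b xs \<noteq> 0" using Suc.prems(2) by auto
    qed
  qed
  obtain x0 where x0: "x0 \<in> A" using ne by auto
  obtain xs0 where "xs0 \<in> permutations_of_set (A - {x0})"
    using Suc.prems(1) permutations_of_set_empty_iff by blast
  then have "x0 # xs0 \<in> permutations_of_set A" using x0 permutations_of_set_nonempty[OF ne] by blast
  then have "tailprod b (x0 # xs0) \<noteq> 0" using Suc.prems(2) by auto
  then have S0: "sum b A \<noteq> 0" using sl[OF x0 \<open>xs0 \<in> _\<close>] by auto
  have P0: "prod b A \<noteq> 0" using Suc.prems by auto
  have "(\<Sum>xs\<in>permutations_of_set A. 1 / tailprod b xs)
      = (\<Sum>x\<in>A. \<Sum>xs\<in>(\<lambda>xs. x # xs) ` permutations_of_set (A - {x}). 1 / tailprod b xs)"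
    by (subst permutations_of_set_nonempty[OF ne], rule sum.UNION_disjoint_family)
       (use Suc.prems disj in auto)
  also have "\<dots> = (\<Sum>x\<in>A. \<Sum>xs\<in>permutations_of_set (A - {x}). 1 / tailprod b (x # xs))"
    by (rule sum.cong[OF refl], subst sum.reindex) (auto simp: inj_on_def)
  also have "\<dots> = (\<Sum>x\<in>A. 1 / sum b A * (\<Sum>xs\<in>permutations_of_set (A - {x}). 1 / tailprod b xs))"
    by (rule sum.cong[OF refl], subst sum_distrib_left, rule sum.cong[OF refl])
       (simp only: tailprod.simps sl, simp)
  also have "\<dots> = (\<Sum>x\<in>A. 1 / sum b A * (b x / prod b A))"
  proof (rule sum.cong[OF refl])
    fix x assume x: "x \<in> A"
    have "prod b A = b x * prod b (A - {x})" using x Suc.prems(1) by (simp add: prod.remove)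
    then show "1 / sum b A * (\<Sum>xs\<in>permutations_of_set (A - {x}). 1 / tailprod b xs) = 1 / sum b A * (b x / prod b A)"
      using IH[OF x] Suc.prems(3) x by simp
  qed
  also have "\<dots> = 1 / prod b A"
    using S0 P0 by (simp add: sum_distrib_left[symmetric] sum_divide_distrib[symmetric])
  finally show ?case .
qed



lemma T_upt: "tailprod b (map f [i..<n]) = (\<Prod>k=i..<n. \<Sum>j=k..<n. b (f j))"
proof (induction "n - i" arbitrary: i)
  case 0
  then show ?case by simp
next
  case (Suc m)
  then have i: "i < n" by simp
  have "tailprod b (map f [i..<n]) = sum_list (map b (map f [i..<n])) * tailprod b (map f [Suc i..<n])"
    using i by (simp add: upt_conv_Cons)
  also have "sum_list (map b (map f [i..<n])) = (\<Sum>j=i..<n. b (f j))"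
    by (simp add: sum_set_upt_conv_sum_list_nat[symmetric] o_def)
  finally show ?case using Suc i by (simp add: prod.atLeast_Suc_lessThan)
qed

lemma perm_list_image:
  "(\<lambda>\<sigma>. map \<sigma> [1..<Suc d]) ` {\<sigma>. \<sigma> permutes {1..d}} = permutations_of_set {1..d}"
    and perm_list_inj: "inj_on (\<lambda>\<sigma>. map \<sigma> [1..<Suc d]) {\<sigma>. \<sigma> permutes {1..d}}"
proof -
  show inj: "inj_on (\<lambda>\<sigma>. map \<sigma> [1..<Suc d]) {\<sigma>. \<sigma> permutes {1..d}}"
  proof (rule inj_onI)
    fix \<sigma> \<tau> assume s: "\<sigma> \<in> {\<sigma>. \<sigma> permutes {1..d}}" and t: "\<tau> \<in> {\<sigma>. \<sigma> permutes {1..d}}"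
      and eq: "map \<sigma> [1..<Suc d] = map \<tau> [1..<Suc d]"
    show "\<sigma> = \<tau>"
    proof
      fix x show "\<sigma> x = \<tau> x"
      proof (cases "x \<in> {1..d}")
        case True
        then show ?thesis using eq by (simp del: upt_Suc add: map_eq_conv)
      next
        case False
        then show ?thesis using s t by (simp add: permutes_not_in)
      qed
    qed
  qed
  have sub: "(\<lambda>\<sigma>. map \<sigma> [1..<Suc d]) ` {\<sigma>. \<sigma> permutes {1..d}} \<subseteq> permutations_of_set {1..d}"
  proof
    fix xs assume "xs \<in> (\<lambda>\<sigma>. map \<sigma> [1..<Suc d]) ` {\<sigma>. \<sigma> permutes {1..d}}"
    then obtain \<sigma> where s: "\<sigma> permutes {1..d}" and xs: "xs = map \<sigma> [1..<Suc d]" by auto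
    have "set xs = \<sigma> ` {1..d}" using xs by auto
    also have "\<dots> = {1..d}" using s by (rule permutes_image)
    finally have "set xs = {1..d}" .
    moreover have "distinct xs" using xs permutes_inj_on[OF s] 
      by (simp add: distinct_map)
    ultimately show "xs \<in> permutations_of_set {1..d}" by auto
  qed
  have "card ((\<lambda>\<sigma>. map \<sigma> [1..<Suc d]) ` {\<sigma>. \<sigma> permutes {1..d}}) = fact d"
    using card_image[OF inj] card_permutations[of "{1..d}" d] by simp
  then show "(\<lambda>\<sigma>. map \<sigma> [1..<Suc d]) ` {\<sigma>. \<sigma> permutes {1..d}} = permutations_of_set {1..d}"
    by (intro card_subset_eq sub) auto
qed

lemma T_perm: "(\<Prod>i=1..d. \<Sum>j=i..d. b (\<sigma> j)) = tailprod b (map \<sigma> [1..<Suc d])"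
  by (simp del: upt_Suc add: T_upt atLeastLessThanSuc_atLeastAtMost)

lemma pf_perm:
  fixes b :: "nat \<Rightarrow> 'a::field"
  assumes "\<forall>\<sigma>. \<sigma> permutes {1..d} \<longrightarrow> (\<forall>i\<in>{1..d}. (\<Sum>j=i..d. b (\<sigma> j)) \<noteq> 0)"
    and "\<forall>k\<in>{1..d}. b k \<noteq> 0"
  shows "(\<Sum>\<sigma>\<in>{\<sigma>. \<sigma> permutes {1..d}}. 1 / (\<Prod>i=1..d. \<Sum>j=i..d. b (\<sigma> j))) = 1 / prod b {1..d}"
proof -
  have "(\<Sum>\<sigma>\<in>{\<sigma>. \<sigma> permutes {1..d}}. 1 / (\<Prod>i=1..d. \<Sum>j=i..d. b (\<sigma> j)))
     = (\<Sum>\<sigma>\<in>{\<sigma>. \<sigma> permutes {1..d}}. 1 / tailprod b (map \<sigma> [1..<Suc d]))"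
    by (simp only: T_perm)
  also have "\<dots> = (\<Sum>xs\<in>permutations_of_set {1..d}. 1 / tailprod b xs)"
    by (subst perm_list_image[symmetric], subst sum.reindex[OF perm_list_inj]) simp
  also have "\<dots> = 1 / prod b {1..d}"
  proof (rule pf_list)
    show "\<forall>xs\<in>permutations_of_set {1..d}. tailprod b xs \<noteq> 0"
    proof
      fix xs assume "xs \<in> permutations_of_set {1..d}"
      then obtain \<sigma> where s: "\<sigma> permutes {1..d}" and xs: "xs = map \<sigma> [1..<Suc d]"
        using perm_list_image[of d] by blast
      show "tailprod b xs \<noteq> 0" using assms(1) s unfolding xs T_perm[symmetric] by auto
    qed
  qed (use assms in auto)
  finally show ?thesis .
qed



lemma det_scale:
  fixes f :: "nat \<times> nat \<Rightarrow> 'a::comm_ring_1"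
  shows "det (mat n n (\<lambda>(i,j). a i * f (i,j) * c j)) = prod a {..<n} * prod c {..<n} * det (mat n n f)"
proof -
  have "det (mat n n (\<lambda>(i,j). a i * f (i,j) * c j)) =
     (\<Sum>p\<in>{p. p permutes {0..<n}}. signof p * (\<Prod>i=0..<n. a i * f (i, p i) * c (p i)))"
    by (subst det_def'[of _ n]) (auto intro!: sum.cong prod.cong)
  also have "\<dots> = (\<Sum>p\<in>{p. p permutes {0..<n}}. prod a {..<n} * prod c {..<n} * (signof p * (\<Prod>i=0..<n. f (i, p i))))"
  proof (rule sum.cong[OF refl])
    fix p assume "p \<in> {p. p permutes {0..<n}}"
    then have p: "p permutes {0..<n}" by simp
    have "(\<Prod>i=0..<n. c (p i)) = (\<Prod>i=0..<n. c i)"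
      using prod.permute[OF p, of c] by (simp add: o_def)
    then show "signof p * (\<Prod>i=0..<n. a i * f (i, p i) * c (p i)) = prod a {..<n} * prod c {..<n} * (signof p * (\<Prod>i=0..<n. f (i, p i)))"
      by (simp add: prod.distrib atLeast0LessThan mult_ac)
  qed
  also have "\<dots> = prod a {..<n} * prod c {..<n} * det (mat n n f)"
    by (subst det_def'[of _ n]) (auto simp: sum_distrib_left intro!: sum.cong prod.cong)
  finally show ?thesis .
qed

lemma frac_aux: "(a::'a::field) \<noteq> 0 \<Longrightarrow> b \<noteq> 0 \<Longrightarrow> (1/a - 1/b) * b = (b - a)/a"
  by (simp add: divide_simps)

lemma frac_aux2: "(a::'a::field) \<noteq> 0 \<Longrightarrow> b \<noteq> 0 \<Longrightarrow> c * (1/a - 1/b) = c * ((b - a)/(a*b))"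
  by (simp add: divide_simps)

definition cmat :: "nat \<Rightarrow> (nat \<Rightarrow> 'a::field) \<Rightarrow> (nat \<Rightarrow> 'a) \<Rightarrow> 'a mat" where
  "cmat n x y = mat n n (\<lambda>(i,j). 1 / (x i + y j))"

lemma cauchy_step:
  fixes x y :: "nat \<Rightarrow> 'a::field"
  assumes nz: "\<And>i j. i \<le> m \<Longrightarrow> j \<le> m \<Longrightarrow> x i + y j \<noteq> 0"
  shows "det (cmat (Suc m) x y) * (\<Prod>j<Suc m. x m + y j)
     = (\<Prod>i<m. (x m - x i) / (x i + y m)) * (\<Prod>j<m. y m - y j) * det (cmat m x y)"
proof -
  let ?n = "Suc m"
  define C where "C = cmat ?n x y"
  define E :: "'a mat" where "E = mat ?n ?n (\<lambda>(i,j). if i = j then 1 else if i < m \<and> j = m then -1 else 0)"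
  define G where "G = mat ?n ?n (\<lambda>(i,j). if i < m then (x m - x i) / (x i + y j) else 1)"
  define F :: "'a mat" where "F = mat ?n ?n (\<lambda>(i,j). if i = j then 1 else if i = m \<and> j < m then -1 else 0)"
  define M where "M = G * F"
  have C: "C \<in> carrier_mat ?n ?n" and E: "E \<in> carrier_mat ?n ?n" and G: "G \<in> carrier_mat ?n ?n"
    and F: "F \<in> carrier_mat ?n ?n" and M: "M \<in> carrier_mat ?n ?n"
    by (auto simp: C_def cmat_def E_def G_def F_def M_def)
  have detE: "det E = 1"
  proof -
    have "upper_triangular E" by (auto simp: upper_triangular_def E_def)
    then have "det E = prod_list (diag_mat E)" using det_upper_triangular[OF _ E] by simp
    also have "diag_mat E = replicate ?n 1"
      by (rule nth_equalityI) (auto simp del: upt_Suc replicate_Suc simp: diag_mat_def E_def)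
    finally show ?thesis by simp
  qed
  have detF: "det F = 1"
  proof -
    have "det F = prod_list (diag_mat F)" 
      by (rule det_lower_triangular[OF _ F]) (auto simp: F_def)
    also have "diag_mat F = replicate ?n 1"
      by (rule nth_equalityI) (auto simp del: upt_Suc replicate_Suc simp: diag_mat_def F_def)
    finally show ?thesis by simp
  qed
  have EC: "(E * C) $$ (i,j) = (if i < m then 1 / (x i + y j) - 1 / (x m + y j) else 1 / (x m + y j))"
    if "i < ?n" "j < ?n" for i j
  proof -
    have "(E * C) $$ (i,j) = (\<Sum>k=0..<?n. E $$ (i,k) * C $$ (k,j))"
      using that E C by (simp add: scalar_prod_def)
    also have "\<dots> = (\<Sum>k=0..<?n. (if k = i then C $$ (k,j) else 0) - (if k = m then (if i < m then C $$ (k,j) else 0) else 0))"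
      using that by (intro sum.cong refl) (auto simp: E_def)
    also have "\<dots> = C $$ (i,j) - (if i < m then C $$ (m,j) else 0)"
      using that by (simp only: sum_subtractf sum.delta finite_atLeastLessThan) simp
    finally show ?thesis using that by (auto simp: C_def cmat_def less_Suc_eq)
  qed
  have "G = mat ?n ?n (\<lambda>(i,j). 1 * (E * C) $$ (i,j) * (x m + y j))"
  proof (rule eq_matI)
    fix i j assume ij: "i < dim_row (mat ?n ?n (\<lambda>(i,j). 1 * (E * C) $$ (i,j) * (x m + y j)))"
       "j < dim_col (mat ?n ?n (\<lambda>(i,j). 1 * (E * C) $$ (i,j) * (x m + y j)))"
    then have i: "i < ?n" and j: "j < ?n" by auto
    have n1: "x m + y j \<noteq> 0" using nz j by simp
    have n2: "i < m \<Longrightarrow> x i + y j \<noteq> 0" using nz j by simp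
    show "G $$ (i,j) = mat ?n ?n (\<lambda>(i,j). 1 * (E * C) $$ (i,j) * (x m + y j)) $$ (i,j)"
    proof (cases "i < m")
      case True
      have "(1/(x i + y j) - 1/(x m + y j)) * (x m + y j) = ((x m + y j) - (x i + y j))/(x i + y j)"
        using n1 n2[OF True] by (rule frac_aux[rotated])
      then have "(1/(x i + y j) - 1/(x m + y j)) * (x m + y j) = (x m - x i)/(x i + y j)" by simp
      then show ?thesis using i j True by (simp add: G_def EC)
    next
      case False
      then show ?thesis using i j n1 by (simp add: G_def EC)
    qed
  qed (auto simp: G_def)
  also have "det \<dots> = prod (\<lambda>_. 1) {..<?n} * (\<Prod>j<?n. x m + y j) * det (mat ?n ?n (\<lambda>p. (E * C) $$ p))"
    by (rule det_scale)
  also have "mat ?n ?n (\<lambda>p. (E * C) $$ p) = E * C"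
    by (rule eq_matI) (use E C in auto)
  finally have detG: "det G = det C * (\<Prod>j<?n. x m + y j)"
    using det_mult[OF E C] detE by simp
  have GF: "M $$ (i,j) = G $$ (i,j) - (if j < m then G $$ (i,m) else 0)"
    if "i < ?n" "j < ?n" for i j
  proof -
    have "M $$ (i,j) = (\<Sum>k=0..<?n. G $$ (i,k) * F $$ (k,j))"
      using that G F by (simp add: M_def scalar_prod_def)
    also have "\<dots> = (\<Sum>k=0..<?n. (if k = j then G $$ (i,k) else 0) - (if k = m then (if j < m then G $$ (i,k) else 0) else 0))"
      using that by (intro sum.cong refl) (auto simp: F_def)
    also have "\<dots> = G $$ (i,j) - (if j < m then G $$ (i,m) else 0)"
      using that by (simp only: sum_subtractf sum.delta finite_atLeastLessThan) simp
    finally show ?thesis .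
  qed
  have detM: "det M = det G" using det_mult[OF G F] detF by (simp add: M_def)
  have Mrow: "M $$ (m,j) = (if j = m then 1 else 0)" if "j < ?n" for j
    using that by (auto simp: GF G_def)
  have "det M = (\<Sum>j<?n. M $$ (m,j) * cofactor M m j)"
    by (rule laplace_expansion_row[OF M]) simp
  also have "\<dots> = cofactor M m m"
  proof -
    have "(\<Sum>j<?n. M $$ (m,j) * cofactor M m j) = (\<Sum>j<?n. if j = m then cofactor M m j else 0)"
      by (rule sum.cong) (auto simp: Mrow)
    also have "\<dots> = cofactor M m m" by (simp only: sum.delta finite_lessThan) simp
    finally show ?thesis .
  qed
  also have "\<dots> = det (mat_delete M m m)"
    by (simp add: cofactor_def)
  also have "mat_delete M m m = mat m m (\<lambda>(i,j). ((x m - x i) / (x i + y m)) * (\<lambda>(i,j). 1 / (x i + y j)) (i,j) * (y m - y j))"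
  proof (rule eq_matI)
    fix i j assume "i < dim_row (mat m m (\<lambda>(i,j). ((x m - x i) / (x i + y m)) * (\<lambda>(i,j). 1 / (x i + y j)) (i,j) * (y m - y j)))"
      "j < dim_col (mat m m (\<lambda>(i,j). ((x m - x i) / (x i + y m)) * (\<lambda>(i,j). 1 / (x i + y j)) (i,j) * (y m - y j)))"
    then have i: "i < m" and j: "j < m" by auto
    have n1: "x i + y j \<noteq> 0" "x i + y m \<noteq> 0" using nz i j by auto
    have "mat_delete M m m $$ (i,j) = M $$ (i,j)" using i j M by (simp add: mat_delete_def)
    also have "\<dots> = (x m - x i) * (1 / (x i + y j) - 1 / (x i + y m))"
      using i j by (simp add: GF G_def right_diff_distrib)
    also have "\<dots> = (x m - x i) * (((x i + y m) - (x i + y j)) / ((x i + y j) * (x i + y m)))"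
      using n1 by (rule frac_aux2)
    also have "\<dots> = ((x m - x i) / (x i + y m)) * (1 / (x i + y j)) * (y m - y j)"
      by (simp add: field_simps)
    finally show "mat_delete M m m $$ (i,j) = mat m m (\<lambda>(i,j). ((x m - x i) / (x i + y m)) * (\<lambda>(i,j). 1 / (x i + y j)) (i,j) * (y m - y j)) $$ (i,j)"
      using i j by simp
  qed (use M in auto)
  also have "det \<dots> = (\<Prod>i<m. (x m - x i) / (x i + y m)) * (\<Prod>j<m. y m - y j) * det (cmat m x y)"
    unfolding cmat_def by (rule det_scale)
  finally show ?thesis using detM detG by (simp add: C_def)
qed

lemma prod_tri_Suc: "(\<Prod>i<Suc m. \<Prod>j\<in>{i<..<Suc m}. f i j) = (\<Prod>i<m. \<Prod>j\<in>{i<..<m}. f i j) * (\<Prod>i<m. f i m)"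
proof -
  have "(\<Prod>i<Suc m. \<Prod>j\<in>{i<..<Suc m}. f i j) = (\<Prod>i<m. \<Prod>j\<in>{i<..<Suc m}. f i j)"
  proof -
    have "{m<..<Suc m} = {}" by auto
    then show ?thesis by simp
  qed
  also have "\<dots> = (\<Prod>i<m. (\<Prod>j\<in>{i<..<m}. f i j) * f i m)"
  proof (rule prod.cong[OF refl])
    fix i assume "i \<in> {..<m}"
    then have "{i<..<Suc m} = insert m {i<..<m}" by auto
    then show "(\<Prod>j\<in>{i<..<Suc m}. f i j) = (\<Prod>j\<in>{i<..<m}. f i j) * f i m" by (simp add: mult.commute)
  qed
  finally show ?thesis by (simp add: prod.distrib)
qed

lemma prod_sq_Suc: "(\<Prod>i<Suc m. \<Prod>j<Suc m. g i j) = (\<Prod>i<m. \<Prod>j<m. g i j) * (\<Prod>i<m. g i m) * (\<Prod>j<Suc m. g m j)"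
proof -
  have "(\<Prod>i<Suc m. \<Prod>j<Suc m. g i j) = (\<Prod>i<m. \<Prod>j<Suc m. g i j) * (\<Prod>j<Suc m. g m j)"
    by (rule prod.lessThan_Suc)
  also have "(\<Prod>i<m. \<Prod>j<Suc m. g i j) = (\<Prod>i<m. (\<Prod>j<m. g i j) * g i m)" by simp
  finally show ?thesis by (simp only: prod.distrib)
qed

lemma cauchy_det:
  fixes x y :: "nat \<Rightarrow> 'a::field"
  assumes "\<And>i j. i < n \<Longrightarrow> j < n \<Longrightarrow> x i + y j \<noteq> 0"
  shows "det (cmat n x y) = (\<Prod>i<n. \<Prod>j\<in>{i<..<n}. (x i - x j) * (y i - y j)) * (\<Prod>i<n. \<Prod>j<n. 1 / (x i + y j))"
  using assms
proof (induction n)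
  case 0
  then show ?case by (simp add: cmat_def)
next
  case (Suc m)
  have nz: "x i + y j \<noteq> 0" if "i \<le> m" "j \<le> m" for i j using Suc.prems that by auto
  have IH: "det (cmat m x y) = (\<Prod>i<m. \<Prod>j\<in>{i<..<m}. (x i - x j) * (y i - y j)) * (\<Prod>i<m. \<Prod>j<m. 1 / (x i + y j))"
    using Suc by auto
  have Q: "(\<Prod>j<Suc m. x m + y j) \<noteq> 0" using nz by (auto simp: prod_zero_iff)
  have "det (cmat (Suc m) x y) = (\<Prod>i<m. (x m - x i) / (x i + y m)) * (\<Prod>j<m. y m - y j) * det (cmat m x y) / (\<Prod>j<Suc m. x m + y j)"
    using cauchy_step[of m x y, OF nz] Q by (simp add: field_simps)
  also have "\<dots> = (\<Prod>i<m. \<Prod>j\<in>{i<..<m}. (x i - x j) * (y i - y j)) * (\<Prod>i<m. (x i - x m) * (y i - y m))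
       * ((\<Prod>i<m. \<Prod>j<m. 1 / (x i + y j)) * (\<Prod>i<m. 1 / (x i + y m)) * (\<Prod>j<Suc m. 1 / (x m + y j)))"
  proof -
    have "(\<Prod>i<m. (x i - x m) * (y i - y m)) = (\<Prod>i<m. x m - x i) * (\<Prod>j<m. y m - y j)"
      by (simp add: prod.distrib[symmetric] algebra_simps)
    moreover have "(\<Prod>i<m. (x m - x i) / (x i + y m)) = (\<Prod>i<m. x m - x i) * (\<Prod>i<m. 1 / (x i + y m))"
      by (simp add: prod.distrib[symmetric])
    moreover have "(\<Prod>j<Suc m. 1 / (x m + y j)) = 1 / (\<Prod>j<Suc m. x m + y j)"
      by (simp add: prod_dividef del: prod.lessThan_Suc)
    ultimately show ?thesis unfolding IH by (simp add: mult_ac)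
  qed
  also have "\<dots> = (\<Prod>i<Suc m. \<Prod>j\<in>{i<..<Suc m}. (x i - x j) * (y i - y j)) * (\<Prod>i<Suc m. \<Prod>j<Suc m. 1 / (x i + y j))"
    by (simp only: prod_tri_Suc prod_sq_Suc)
  finally show ?case .
qed

lemma Suc_img1: "{1..d} = Suc ` {..<d}" by (simp add: image_Suc_lessThan)

lemma Suc_img2: "{Suc i<..d} = Suc ` {i<..<d}"
proof
  show "{Suc i<..d} \<subseteq> Suc ` {i<..<d}"
  proof
    fix j assume j: "j \<in> {Suc i<..d}"
    then have "j = Suc (j - 1)" "j - 1 \<in> {i<..<d}" by auto
    then show "j \<in> Suc ` {i<..<d}" by (metis imageI)
  qed
qed auto

lemma prod_shift1: "(\<Prod>k=1..d. f k) = (\<Prod>i<d. f (Suc i))"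
  unfolding Suc_img1 by (simp add: prod.reindex)

lemma prod_shift2: "(\<Prod>j\<in>{Suc i<..d}. f j) = (\<Prod>j\<in>{i<..<d}. f (Suc j))"
  by (simp add: Suc_img2 prod.reindex)

lemma bij_Suc: "bij_betw Suc {0..<d} {1..d}"
  by (simp add: bij_betw_def atLeast0LessThan image_Suc_lessThan)

lemma bij_pred: "bij_betw (\<lambda>i::nat. i - 1) {1..d} {0..<d}"
proof (rule bij_betw_imageI)
  show "inj_on (\<lambda>i::nat. i - 1) {1..d}" by (auto simp: inj_on_def)
  show "(\<lambda>i::nat. i - 1) ` {1..d} = {0..<d}"
  proof
    show "(\<lambda>i::nat. i - 1) ` {1..d} \<subseteq> {0..<d}" by auto
    show "{0..<d} \<subseteq> (\<lambda>i::nat. i - 1) ` {1..d}"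
    proof
      fix j assume "j \<in> {0..<d}"
      then have "Suc j \<in> {1..d}" "j = Suc j - 1" by auto
      then show "j \<in> (\<lambda>i::nat. i - 1) ` {1..d}" by blast
    qed
  qed
qed

lemma bij_shift_perm:
  "bij_betw (map_permutation {0..<d} Suc) {p. p permutes {0..<d}} {\<rho>. \<rho> permutes {1..d}}"
proof (rule bij_betw_byWitness[where f'="map_permutation {1..d} (\<lambda>i. i - 1)"])
  show "\<forall>a\<in>{p. p permutes {0..<d}}. map_permutation {1..d} (\<lambda>i. i - 1) (map_permutation {0..<d} Suc a) = a"
  proof
    fix a assume a: "a \<in> {p. p permutes {0..<d}}"
    show "map_permutation {1..d} (\<lambda>i. i - 1) (map_permutation {0..<d} Suc a) = a"
      by (rule map_permutation_compose_inv[OF bij_Suc]) (use a in auto)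
  qed
  show "\<forall>a\<in>{p. p permutes {1..d}}. map_permutation {0..<d} Suc (map_permutation {1..d} (\<lambda>i. i - 1) a) = a"
  proof
    fix a assume a: "a \<in> {p. p permutes {1..d}}"
    show "map_permutation {0..<d} Suc (map_permutation {1..d} (\<lambda>i. i - 1) a) = a"
      by (rule map_permutation_compose_inv[OF bij_pred]) (use a in auto)
  qed
  show "map_permutation {0..<d} Suc ` {p. p permutes {0..<d}} \<subseteq> {p. p permutes {1..d}}"
  proof (rule image_subsetI)
    fix a assume "a \<in> {p. p permutes {0..<d}}"
    then show "map_permutation {0..<d} Suc a \<in> {p. p permutes {1..d}}"
      using map_permutation_permutes[OF bij_Suc, of a] by simp
  qed
  show "map_permutation {1..d} (\<lambda>i. i - 1) ` {p. p permutes {1..d}} \<subseteq> {p. p permutes {0..<d}}"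
  proof (rule image_subsetI)
    fix a assume "a \<in> {p. p permutes {1..d}}"
    then show "map_permutation {1..d} (\<lambda>i. i - 1) a \<in> {p. p permutes {0..<d}}"
      using map_permutation_permutes[OF bij_pred, of a] by simp
  qed
qed

lemma cauchy_perm:
  fixes s t :: "nat \<Rightarrow> 'a::field_char_0"
  assumes "\<forall>i\<in>{1..d}. \<forall>j\<in>{1..d}. 1 + s i + t j \<noteq> 0"
  shows "(\<Sum>\<rho>\<in>{\<rho>. \<rho> permutes {1..d}}. of_int (sign \<rho>) * (\<Prod>k=1..d. 1 / (1 + s k + t (\<rho> k))))
       = (\<Prod>i=1..d. \<Prod>j\<in>{i<..d}. (s i - s j) * (t i - t j))
         * (\<Prod>i=1..d. \<Prod>j=1..d. 1 / (1 + s i + t j))"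
proof -
  define x where "x i = s (Suc i)" for i
  define y where "y j = 1 + t (Suc j)" for j
  have nz: "x i + y j \<noteq> 0" if "i < d" "j < d" for i j
  proof -
    have "Suc i \<in> {1..d}" "Suc j \<in> {1..d}" using that by auto
    then have "1 + s (Suc i) + t (Suc j) \<noteq> 0" using assms by blast
    then show ?thesis unfolding x_def y_def by (simp add: add_ac)
  qed
  have "(\<Sum>\<rho>\<in>{\<rho>. \<rho> permutes {1..d}}. of_int (sign \<rho>) * (\<Prod>k=1..d. 1 / (1 + s k + t (\<rho> k))))
      = (\<Sum>p\<in>{p. p permutes {0..<d}}. of_int (sign (map_permutation {0..<d} Suc p)) *
           (\<Prod>k=1..d. 1 / (1 + s k + t (map_permutation {0..<d} Suc p k))))"
    by (rule sum.reindex_bij_betw[OF bij_shift_perm, symmetric])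
  also have "\<dots> = (\<Sum>p\<in>{p. p permutes {0..<d}}. signof p * (\<Prod>i=0..<d. cmat d x y $$ (i, p i)))"
  proof (rule sum.cong[OF refl])
    fix p assume "p \<in> {p. p permutes {0..<d}}"
    then have p: "p permutes {0..<d}" by simp
    have sg: "sign (map_permutation {0..<d} Suc p) = sign p"
      by (rule sign_map_permutation) (use p in auto)
    have "(\<Prod>k=1..d. 1 / (1 + s k + t (map_permutation {0..<d} Suc p k)))
        = (\<Prod>i<d. 1 / (1 + s (Suc i) + t (map_permutation {0..<d} Suc p (Suc i))))"
      by (rule prod_shift1)
    also have "\<dots> = (\<Prod>i=0..<d. cmat d x y $$ (i, p i))"
    proof -
      have eqi: "1 / (1 + s (Suc i) + t (map_permutation {0..<d} Suc p (Suc i))) = cmat d x y $$ (i, p i)"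
        if i: "i < d" for i
      proof -
        have "map_permutation {0..<d} Suc p (Suc i) = Suc (p i)"
          using map_permutation_apply[where f=Suc and A="{0..<d}" and x=i and h=p] i by auto
        moreover have "p i < d" using permutes_in_image[OF p, of i] i by auto
        ultimately show ?thesis
          using i by (simp add: cmat_def x_def y_def add_ac)
      qed
      show ?thesis
        apply (rule prod.cong)
         apply (simp add: atLeast0LessThan)
        apply (rule eqi)
        apply simp
        done
    qed
    finally show "of_int (sign (map_permutation {0..<d} Suc p)) *
           (\<Prod>k=1..d. 1 / (1 + s k + t (map_permutation {0..<d} Suc p k))) = signof p * (\<Prod>i=0..<d. cmat d x y $$ (i, p i))"
      by (simp add: sg)
  qed
  also have "\<dots> = det (cmat d x y)"
    by (rule det_def'[symmetric]) (simp add: cmat_def)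
  also have "\<dots> = (\<Prod>i<d. \<Prod>j\<in>{i<..<d}. (x i - x j) * (y i - y j)) * (\<Prod>i<d. \<Prod>j<d. 1 / (x i + y j))"
    by (rule cauchy_det) (use nz in auto)
  also have "\<dots> = (\<Prod>i=1..d. \<Prod>j\<in>{i<..d}. (s i - s j) * (t i - t j))
         * (\<Prod>i=1..d. \<Prod>j=1..d. 1 / (1 + s i + t j))"
    unfolding prod_shift1 prod_shift2 by (simp add: x_def y_def add_ac)
  finally show ?thesis .
qed



lemma sum_shift1: "of_nat (d + 1 - i) + (\<Sum>j=i..d. (x j :: 'a::field)) = (\<Sum>j=i..d. 1 + x j)"
  by (simp add: sum.distrib)

theorem mainTheorem3:
  fixes d :: nat and s t :: "nat \<Rightarrow> 'a::field_char_0"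
  assumes "d \<ge> 1"
    and "\<forall>\<sigma> \<tau>. \<sigma> permutes {1..d} \<longrightarrow> \<tau> permutes {1..d} \<longrightarrow>
          (\<forall>i\<in>{1..d}. of_nat (d + 1 - i) + (\<Sum>j=i..d. s (\<sigma> j) + t (\<tau> j)) \<noteq> 0)"
    and "\<forall>i\<in>{1..d}. \<forall>j\<in>{1..d}. 1 + s i + t j \<noteq> 0"
  shows "(\<Sum>\<sigma>\<in>{\<sigma>. \<sigma> permutes {1..d}}. \<Sum>\<tau>\<in>{\<tau>. \<tau> permutes {1..d}}.
            of_int (sign \<sigma> * sign \<tau>) /
            (\<Prod>i=1..d. of_nat (d + 1 - i) + (\<Sum>j=i..d. s (\<sigma> j) + t (\<tau> j))))
       = (\<Prod>i=1..d. \<Prod>j\<in>{i<..d}. (s i - s j) * (t i - t j))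
         * (\<Prod>i=1..d. \<Prod>j=1..d. 1 / (1 + s i + t j))"
proof -
  let ?P = "{\<sigma>. \<sigma> permutes {1..d}}"
  define b where "b \<rho> k = 1 + s k + t (\<rho> k)" for \<rho> k
  have key: "of_int (sign \<sigma> * sign (\<rho> \<circ> \<sigma>)) /
            (\<Prod>i=1..d. of_nat (d + 1 - i) + (\<Sum>j=i..d. s (\<sigma> j) + t ((\<rho> \<circ> \<sigma>) j)))
          = of_int (sign \<rho>) * (1 / (\<Prod>i=1..d. \<Sum>j=i..d. b \<rho> (\<sigma> j)))"
    if "\<sigma> permutes {1..d}" "\<rho> permutes {1..d}" for \<sigma> \<rho>
  proof -
    have pp: "permutation \<sigma>" "permutation \<rho>" using that permutation_permutes by blast+
    have "sign \<sigma> * sign (\<rho> \<circ> \<sigma>) = sign \<rho>"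
      using pp by (simp add: sign_compose mult.left_commute)
    moreover have "(\<Prod>i=1..d. of_nat (d + 1 - i) + (\<Sum>j=i..d. s (\<sigma> j) + t ((\<rho> \<circ> \<sigma>) j)))
        = (\<Prod>i=1..d. \<Sum>j=i..d. b \<rho> (\<sigma> j))"
      by (rule prod.cong[OF refl], subst sum_shift1) (simp add: b_def add.assoc)
    ultimately show ?thesis by simp
  qed
  have "?thesis = ((\<Sum>\<sigma>\<in>?P. \<Sum>\<rho>\<in>?P. of_int (sign \<rho>) * (1 / (\<Prod>i=1..d. \<Sum>j=i..d. b \<rho> (\<sigma> j))))
       = (\<Prod>i=1..d. \<Prod>j\<in>{i<..d}. (s i - s j) * (t i - t j))
         * (\<Prod>i=1..d. \<Prod>j=1..d. 1 / (1 + s i + t j)))"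
    apply (rule arg_cong[where f="\<lambda>x. x = _"])
    apply (rule sum.cong[OF refl])
    apply (subst sum_permutations_compose_right[where q=\<sigma> for \<sigma>], simp)
    apply (rule sum.cong[OF refl])
    apply (rule key; simp)
    done
  also have "(\<Sum>\<sigma>\<in>?P. \<Sum>\<rho>\<in>?P. of_int (sign \<rho>) * (1 / (\<Prod>i=1..d. \<Sum>j=i..d. b \<rho> (\<sigma> j))))
     = (\<Sum>\<rho>\<in>?P. of_int (sign \<rho>) * (\<Sum>\<sigma>\<in>?P. 1 / (\<Prod>i=1..d. \<Sum>j=i..d. b \<rho> (\<sigma> j))))"
    by (subst sum.swap) (simp add: sum_distrib_left)
  also have "\<dots> = (\<Sum>\<rho>\<in>?P. of_int (sign \<rho>) * (1 / prod (b \<rho>) {1..d}))"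
  proof (rule sum.cong[OF refl])
    fix \<rho> assume r: "\<rho> \<in> ?P"
    have "(\<Sum>\<sigma>\<in>?P. 1 / (\<Prod>i=1..d. \<Sum>j=i..d. b \<rho> (\<sigma> j))) = 1 / prod (b \<rho>) {1..d}"
    proof (rule pf_perm)
      show "\<forall>\<sigma>. \<sigma> permutes {1..d} \<longrightarrow> (\<forall>i\<in>{1..d}. (\<Sum>j=i..d. b \<rho> (\<sigma> j)) \<noteq> 0)"
      proof (intro allI impI ballI)
        fix \<sigma> i assume s: "\<sigma> permutes {1..d}" and i: "i \<in> {1..d}"
        have "\<rho> \<circ> \<sigma> permutes {1..d}" using s r by (simp add: permutes_compose)
        then have "of_nat (d + 1 - i) + (\<Sum>j=i..d. s (\<sigma> j) + t ((\<rho> \<circ> \<sigma>) j)) \<noteq> 0"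
          using assms(2) s i by blast
        then show "(\<Sum>j=i..d. b \<rho> (\<sigma> j)) \<noteq> 0"
          by (subst (asm) sum_shift1) (simp add: b_def add.assoc)
      qed
      show "\<forall>k\<in>{1..d}. b \<rho> k \<noteq> 0"
      proof
        fix k assume k: "k \<in> {1..d}"
        then have "\<rho> k \<in> {1..d}" using r permutes_in_image[of \<rho> "{1..d}" k] by simp
        then show "b \<rho> k \<noteq> 0" using assms(3) k by (simp add: b_def)
      qed
    qed
    then show "of_int (sign \<rho>) * (\<Sum>\<sigma>\<in>?P. 1 / (\<Prod>i=1..d. \<Sum>j=i..d. b \<rho> (\<sigma> j)))
        = of_int (sign \<rho>) * (1 / prod (b \<rho>) {1..d})" by simp
  qed
  also have "\<dots> = (\<Sum>\<rho>\<in>?P. of_int (sign \<rho>) * (\<Prod>k=1..d. 1 / (1 + s k + t (\<rho> k))))"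
    by (simp add: b_def prod_dividef)
  finally show ?thesis using cauchy_perm[OF assms(3)] by simp
qed


end
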